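(* Consider any economy $\mathcal{E}$ (as in the context). If firm $f$ and worker $w$ form a top-top match in state $\theta$ (i.e. in market $\mathcal{M}(\theta)$, $w$ is $f$'s favorite worker among all workers and $f$ is $w$'s favorite firm among all firms), then $f$ and $w$ are matched to each other in state $\theta$ under every BNE (with truthfully reporting firms).
   Context: Matching market: $(F,W,U)$ with finite firms, finite workers, utilities of each firm from each worker and each worker from each firm; unmatched utility $0$; all preferences strict; all pairs mutually acceptable. An economy is $\mathcal{E}=(F,W,\{U(\theta)\}_{\theta\in\Theta},\Theta,\Psi)$ with finite state set $\Theta$, full-support prior $\Psi$, market $\mathcal{M}(\theta)=(F,W,U(\theta))$ in state $\theta$; workers' utilities are state-independent, firms' may depend on $\theta$; each $\mathcal{M}(\theta)$ has a unique stable matching. Game: state drawn by $\Psi$; firms observe it; each worker knows only his own preferences; all simultaneously submit rank-ordered lists of acceptable partners; firm-proposing Deferred Acceptance is run on the reports. Firms report truthfully; a worker's strategy is one list; a BNE is a profile in which each worker's list maximizes his expected utility under $\Psi$ given the others' strategies. *)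

theory Defs
  imports Complex_Main
begin

text \<open>Firms have type 'f, workers 'w, states 's.  uF s f w is firm f's utility from
  worker w in state s; uW w f is worker w's (state-independent) utility from firm f.
  Being unmatched gives utility 0.\<close>

definition is_matching :: "'f set \<Rightarrow> 'w set \<Rightarrow> ('f \<times> 'w) set \<Rightarrow> bool" where
  "is_matching F W M \<longleftrightarrow> M \<subseteq> F \<times> W \<and>
     (\<forall>f w w'. (f,w) \<in> M \<longrightarrow> (f,w') \<in> M \<longrightarrow> w = w') \<and>
     (\<forall>f f' w. (f,w) \<in> M \<longrightarrow> (f',w) \<in> M \<longrightarrow> f = f')"

definition blocking_pair ::
  "('f \<Rightarrow> 'w \<Rightarrow> real) \<Rightarrow> ('w \<Rightarrow> 'f \<Rightarrow> real) \<Rightarrow> ('f \<times> 'w) set \<Rightarrow> 'f \<Rightarrow> 'w \<Rightarrow> bool" where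
  "blocking_pair uf uw M f w \<longleftrightarrow> (f,w) \<notin> M \<and>
     uf f w > 0 \<and> (\<forall>w'. (f,w') \<in> M \<longrightarrow> uf f w > uf f w') \<and>
     uw w f > 0 \<and> (\<forall>f'. (f',w) \<in> M \<longrightarrow> uw w f > uw w f')"

definition stable ::
  "'f set \<Rightarrow> 'w set \<Rightarrow> ('f \<Rightarrow> 'w \<Rightarrow> real) \<Rightarrow> ('w \<Rightarrow> 'f \<Rightarrow> real) \<Rightarrow> ('f \<times> 'w) set \<Rightarrow> bool" where
  "stable F W uf uw M \<longleftrightarrow> is_matching F W M \<and>
     (\<forall>(f,w) \<in> M. uf f w \<ge> 0 \<and> uw w f \<ge> 0) \<and>
     (\<forall>f\<in>F. \<forall>w\<in>W. \<not> blocking_pair uf uw M f w)"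

definition economy ::
  "'f set \<Rightarrow> 'w set \<Rightarrow> 's set \<Rightarrow> ('s \<Rightarrow> real) \<Rightarrow> ('s \<Rightarrow> 'f \<Rightarrow> 'w \<Rightarrow> real) \<Rightarrow> ('w \<Rightarrow> 'f \<Rightarrow> real) \<Rightarrow> bool" where
  "economy F W \<Theta> \<Psi> uF uW \<longleftrightarrow>
     finite F \<and> finite W \<and> finite \<Theta> \<and>
     (\<forall>\<theta>\<in>\<Theta>. \<Psi> \<theta> > 0) \<and> (\<Sum>\<theta>\<in>\<Theta>. \<Psi> \<theta>) = 1 \<and>
     (\<forall>\<theta>\<in>\<Theta>. \<forall>f\<in>F. inj_on (uF \<theta> f) W) \<and>
     (\<forall>w\<in>W. inj_on (uW w) F) \<and>
     (\<forall>\<theta>\<in>\<Theta>. \<forall>f\<in>F. \<forall>w\<in>W. uF \<theta> f w > 0) \<and>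
     (\<forall>w\<in>W. \<forall>f\<in>F. uW w f > 0) \<and>
     (\<forall>\<theta>\<in>\<Theta>. \<exists>!M. stable F W (uF \<theta>) uW M)"

definition pref_list :: "('a \<Rightarrow> real) \<Rightarrow> 'a set \<Rightarrow> 'a list" where
  "pref_list u A = (THE l. distinct l \<and> set l = A \<and> sorted_wrt (\<lambda>a b. u a > u b) l)"

definition ranked_above :: "'a list \<Rightarrow> 'a \<Rightarrow> 'a \<Rightarrow> bool" where
  "ranked_above l a b \<longleftrightarrow> (\<exists>i j. i < j \<and> j < length l \<and> l ! i = a \<and> l ! j = b)"

text \<open>State k: k f is the number of rejections firm f has received, so f currently
  proposes to the (k f)-th entry of its list (if any).  In each round every worker
  keeps the best acceptable proposal among those currently addressed to her and rejects
  all others; rejected firms move on.\<close>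
definition proposal :: "('f \<Rightarrow> 'w list) \<Rightarrow> ('f \<Rightarrow> nat) \<Rightarrow> 'f \<Rightarrow> 'w option" where
  "proposal pf k f = (if k f < length (pf f) then Some (pf f ! k f) else None)"

definition rejected ::
  "'f set \<Rightarrow> ('f \<Rightarrow> 'w list) \<Rightarrow> ('w \<Rightarrow> 'f list) \<Rightarrow> ('f \<Rightarrow> nat) \<Rightarrow> 'f \<Rightarrow> bool" where
  "rejected F pf pw k f \<longleftrightarrow> (\<exists>w. proposal pf k f = Some w \<and>
      (f \<notin> set (pw w) \<or>
       (\<exists>g\<in>F. g \<noteq> f \<and> proposal pf k g = Some w \<and> g \<in> set (pw w) \<and> ranked_above (pw w) g f)))"

definition da_step ::
  "'f set \<Rightarrow> ('f \<Rightarrow> 'w list) \<Rightarrow> ('w \<Rightarrow> 'f list) \<Rightarrow> ('f \<Rightarrow> nat) \<Rightarrow> ('f \<Rightarrow> nat)" where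
  "da_step F pf pw k = (\<lambda>f. if f \<in> F \<and> rejected F pf pw k f then Suc (k f) else k f)"

text \<open>Each non-terminal round increases the total number of rejections, which is bounded
  by the total length of the firms' lists; so this many rounds reach the final state.\<close>
definition da_final ::
  "'f set \<Rightarrow> ('f \<Rightarrow> 'w list) \<Rightarrow> ('w \<Rightarrow> 'f list) \<Rightarrow> ('f \<Rightarrow> nat)" where
  "da_final F pf pw = (da_step F pf pw ^^ (\<Sum>f\<in>F. length (pf f))) (\<lambda>_. 0)"

definition DA :: "'f set \<Rightarrow> ('f \<Rightarrow> 'w list) \<Rightarrow> ('w \<Rightarrow> 'f list) \<Rightarrow> 'f \<Rightarrow> 'w option" where
  "DA F pf pw f = (if f \<in> F then proposal pf (da_final F pf pw) f else None)"

definition firm_lists :: "'w set \<Rightarrow> ('s \<Rightarrow> 'f \<Rightarrow> 'w \<Rightarrow> real) \<Rightarrow> 's \<Rightarrow> 'f \<Rightarrow> 'w list" where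
  "firm_lists W uF \<theta> f = pref_list (uF \<theta> f) W"

definition worker_strategy :: "'f set \<Rightarrow> 'f list \<Rightarrow> bool" where
  "worker_strategy F l \<longleftrightarrow> distinct l \<and> set l \<subseteq> F"

definition worker_payoff :: "'f set \<Rightarrow> ('w \<Rightarrow> 'f \<Rightarrow> real) \<Rightarrow> ('f \<Rightarrow> 'w option) \<Rightarrow> 'w \<Rightarrow> real" where
  "worker_payoff F uW \<mu> w =
     (if \<exists>f\<in>F. \<mu> f = Some w then uW w (THE f. f \<in> F \<and> \<mu> f = Some w) else 0)"

definition expected_payoff ::
  "'f set \<Rightarrow> 'w set \<Rightarrow> 's set \<Rightarrow> ('s \<Rightarrow> real) \<Rightarrow> ('s \<Rightarrow> 'f \<Rightarrow> 'w \<Rightarrow> real) \<Rightarrow> ('w \<Rightarrow> 'f \<Rightarrow> real)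
     \<Rightarrow> ('w \<Rightarrow> 'f list) \<Rightarrow> 'w \<Rightarrow> real" where
  "expected_payoff F W \<Theta> \<Psi> uF uW \<sigma> w =
     (\<Sum>\<theta>\<in>\<Theta>. \<Psi> \<theta> * worker_payoff F uW (DA F (firm_lists W uF \<theta>) \<sigma>) w)"

definition BNE ::
  "'f set \<Rightarrow> 'w set \<Rightarrow> 's set \<Rightarrow> ('s \<Rightarrow> real) \<Rightarrow> ('s \<Rightarrow> 'f \<Rightarrow> 'w \<Rightarrow> real) \<Rightarrow> ('w \<Rightarrow> 'f \<Rightarrow> real)
     \<Rightarrow> ('w \<Rightarrow> 'f list) \<Rightarrow> bool" where
  "BNE F W \<Theta> \<Psi> uF uW \<sigma> \<longleftrightarrow>
     (\<forall>w\<in>W. worker_strategy F (\<sigma> w)) \<and>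
     (\<forall>w\<in>W. \<forall>l. worker_strategy F l \<longrightarrow>
        expected_payoff F W \<Theta> \<Psi> uF uW (\<sigma>(w := l)) w \<le> expected_payoff F W \<Theta> \<Psi> uF uW \<sigma> w)"

end

theory Submission
  imports Defs
begin

lemma pref_list_props:
  assumes "finite A" "inj_on u A"
  shows "distinct (pref_list u A) \<and> set (pref_list u A) = A \<and> sorted_wrt (\<lambda>a b. u a > u b) (pref_list u A)"
proof -
  let ?P = "\<lambda>l. distinct l \<and> set l = A \<and> sorted_wrt (\<lambda>a b. u a > u b) l"
  interpret folding_insort_key "(\<le>)" "(<)" A "\<lambda>a. - u a"
    by unfold_locales (use assms(2) in \<open>auto simp: inj_on_def\<close>)
  obtain l where l: "sorted_wrt (<) (map (\<lambda>a. - u a) l)" "set l = A" "length l = card A"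
    using finite_set_strict_sorted[OF order_refl assms(1)] by blast
  have "?P l" using l by (auto simp: sorted_wrt_map card_distinct)
  moreover have "l' = l" if "?P l'" for l'
  proof -
    have "map (\<lambda>a. - u a) l' = map (\<lambda>a. - u a) l"
      apply (rule strict_sorted_equal)
      using that l by (auto simp: sorted_wrt_map)
    moreover have "inj_on (\<lambda>a. - u a) (set l' \<union> set l)" using assms(2) that l
      by (auto simp: inj_on_def)
    ultimately show ?thesis using map_inj_on by blast
  qed
  ultimately have "\<exists>!l. ?P l" by blast
  from theI'[OF this] show ?thesis unfolding pref_list_def .
qed

lemma ranked_above_split:
  "ranked_above l a b \<longleftrightarrow> (\<exists>xs ys. l = xs @ ys \<and> a \<in> set xs \<and> b \<in> set ys)"
proof
  assume "ranked_above l a b"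
  then obtain i j where ij: "i < j" "j < length l" "l ! i = a" "l ! j = b"
    unfolding ranked_above_def by blast
  have "a \<in> set (take j l)" using ij by (metis in_set_conv_nth length_take min.absorb4 nth_take)
  moreover have "b \<in> set (drop j l)" using ij by (metis Cons_nth_drop_Suc list.set_intros(1))
  ultimately show "\<exists>xs ys. l = xs @ ys \<and> a \<in> set xs \<and> b \<in> set ys"
    by (metis append_take_drop_id)
next
  assume "\<exists>xs ys. l = xs @ ys \<and> a \<in> set xs \<and> b \<in> set ys"
  then obtain xs ys where s: "l = xs @ ys" "a \<in> set xs" "b \<in> set ys" by blast
  obtain i where i: "i < length xs" "xs ! i = a" using s by (meson in_set_conv_nth)
  obtain j where j: "j < length ys" "ys ! j = b" using s by (meson in_set_conv_nth)
  show "ranked_above l a b" unfolding ranked_above_def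
    apply (rule exI[of _ i], rule exI[of _ "length xs + j"])
    using s i j by (auto simp: nth_append)
qed

lemma filter_eq_append:
  "filter P l = as @ bs \<Longrightarrow> \<exists>xs ys. l = xs @ ys \<and> filter P xs = as \<and> filter P ys = bs"
proof (induction l arbitrary: as)
  case Nil then show ?case by auto
next
  case (Cons x l)
  show ?case
  proof (cases "P x")
    case True
    show ?thesis
    proof (cases as)
      case Nil
      then show ?thesis using Cons.prems by (intro exI[of _ "[]"] exI[of _ "x # l"]) auto
    next
      case (Cons a as')
      with Cons.prems True have "filter P l = as' @ bs" "a = x" by auto
      from Cons.IH[OF this(1)] obtain xs ys where "l = xs @ ys" "filter P xs = as'" "filter P ys = bs" by blast
      then show ?thesis using True Cons \<open>a = x\<close> by (intro exI[of _ "x # xs"] exI[of _ ys]) auto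
    qed
  next
    case False
    with Cons.prems have "filter P l = as @ bs" by auto
    from Cons.IH[OF this] obtain xs ys where "l = xs @ ys" "filter P xs = as" "filter P ys = bs" by blast
    then show ?thesis using False by (intro exI[of _ "x # xs"] exI[of _ ys]) auto
  qed
qed

lemma ranked_above_move:
  assumes "h \<noteq> f" "g \<noteq> f"
  shows "ranked_above (f # filter (\<lambda>x. x \<noteq> f) L) h g \<longleftrightarrow> ranked_above L h g"
proof
  assume "ranked_above (f # filter (\<lambda>x. x \<noteq> f) L) h g"
  then obtain xs ys where s: "f # filter (\<lambda>x. x \<noteq> f) L = xs @ ys" "h \<in> set xs" "g \<in> set ys"
    unfolding ranked_above_split by blast
  then obtain xs' where "xs = f # xs'" by (cases xs) auto
  with s have "filter (\<lambda>x. x \<noteq> f) L = xs' @ ys" "h \<in> set xs'" using assms by auto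
  from filter_eq_append[OF this(1)] obtain as bs where "L = as @ bs" "filter (\<lambda>x. x \<noteq> f) as = xs'"
    "filter (\<lambda>x. x \<noteq> f) bs = ys" by blast
  then show "ranked_above L h g" unfolding ranked_above_split using s \<open>h \<in> set xs'\<close> by (intro exI[of _ as] exI[of _ bs]) auto
next
  assume "ranked_above L h g"
  then obtain xs ys where s: "L = xs @ ys" "h \<in> set xs" "g \<in> set ys"
    unfolding ranked_above_split by blast
  show "ranked_above (f # filter (\<lambda>x. x \<noteq> f) L) h g" unfolding ranked_above_split
    apply (rule exI[of _ "f # filter (\<lambda>x. x \<noteq> f) xs"], rule exI[of _ "filter (\<lambda>x. x \<noteq> f) ys"])
    using s assms by auto
qed

lemma da_step_bound:
  assumes "\<forall>g\<in>F. k g \<le> length (pf g)"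
  shows "\<forall>g\<in>F. da_step F pf pw k g \<le> length (pf g)"
  using assms unfolding da_step_def rejected_def proposal_def
  by (auto split: if_splits)

lemma da_iter_bound:
  "\<forall>g\<in>F. (da_step F pf pw ^^ n) (\<lambda>_. 0) g \<le> length (pf g)"
  by (induction n) (auto intro: da_step_bound[rule_format])

lemma da_step_ge: "k g \<le> da_step F pf pw k g"
  unfolding da_step_def by auto

lemma da_iter_fix_or_big:
  assumes "finite F"
  shows "da_step F pf pw ((da_step F pf pw ^^ n) (\<lambda>_. 0)) = (da_step F pf pw ^^ n) (\<lambda>_. 0)
     \<or> n \<le> (\<Sum>g\<in>F. (da_step F pf pw ^^ n) (\<lambda>_. 0) g)"
proof (induction n)
  case 0 then show ?case by simp
next
  case (Suc n)
  let ?k = "(da_step F pf pw ^^ n) (\<lambda>_. 0)"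
  show ?case
  proof (cases "da_step F pf pw ?k = ?k")
    case True then show ?thesis by simp
  next
    case False
    with Suc.IH have ge: "n \<le> (\<Sum>g\<in>F. ?k g)" by blast
    from False obtain g where g: "da_step F pf pw ?k g \<noteq> ?k g" by auto
    then have "g \<in> F" unfolding da_step_def by (auto split: if_splits)
    have "(\<Sum>g\<in>F. ?k g) < (\<Sum>g\<in>F. da_step F pf pw ?k g)"
    proof (rule sum_strict_mono_ex1[OF assms])
      show "\<forall>x\<in>F. ?k x \<le> da_step F pf pw ?k x" using da_step_ge[of ?k _ F pf pw] by blast
      have "?k g < da_step F pf pw ?k g" using da_step_ge[of ?k g F pf pw] g by linarith
      then show "\<exists>a\<in>F. ?k a < da_step F pf pw ?k a" using \<open>g \<in> F\<close> by blast
    qed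
    with ge show ?thesis by simp
  qed
qed

lemma da_final_fix:
  assumes "finite F"
  shows "da_step F pf pw (da_final F pf pw) = da_final F pf pw"
proof (rule ccontr)
  let ?N = "\<Sum>f\<in>F. length (pf f)"
  let ?k = "da_final F pf pw"
  assume nf: "da_step F pf pw ?k \<noteq> ?k"
  have kdef: "?k = (da_step F pf pw ^^ ?N) (\<lambda>_. 0)" unfolding da_final_def by (rule refl)
  have ge: "?N \<le> (\<Sum>g\<in>F. ?k g)"
    using da_iter_fix_or_big[OF assms, of pf pw ?N] nf unfolding kdef[symmetric] by blast
  have bd: "\<forall>g\<in>F. ?k g \<le> length (pf g)" unfolding kdef by (rule da_iter_bound)
  have eqs: "\<forall>g\<in>F. ?k g = length (pf g)"
  proof (rule ccontr)
    assume "\<not> (\<forall>g\<in>F. ?k g = length (pf g))"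
    then obtain g where "g \<in> F" "?k g < length (pf g)" using bd le_neq_implies_less by blast
    then have "(\<Sum>g\<in>F. ?k g) < ?N"
      by (intro sum_strict_mono_ex1[OF assms]) (use bd in auto)
    with ge show False by simp
  qed
  have "da_step F pf pw ?k = ?k"
  proof (rule ext)
    fix g
    show "da_step F pf pw ?k g = ?k g"
    proof (cases "g \<in> F")
      case True
      then have "proposal pf ?k g = None" using eqs unfolding proposal_def by simp
      then have "\<not> rejected F pf pw ?k g" unfolding rejected_def by simp
      then show ?thesis unfolding da_step_def by simp
    next
      case False then show ?thesis unfolding da_step_def by simp
    qed
  qed
  with nf show False by simp
qed

lemma DA_unique:
  assumes "finite F" "g1 \<in> F" "g2 \<in> F" "DA F pf pw g1 = Some v" "DA F pf pw g2 = Some v"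
  shows "g1 = g2"
proof (rule ccontr)
  assume ne: "g1 \<noteq> g2"
  let ?k = "da_final F pf pw"
  have fx: "da_step F pf pw ?k = ?k" by (rule da_final_fix[OF assms(1)])
  have nr: "\<not> rejected F pf pw ?k g" if "g \<in> F" for g
    using fun_cong[OF fx, of g] that unfolding da_step_def by auto
  have p: "proposal pf ?k g1 = Some v" "proposal pf ?k g2 = Some v"
    using assms unfolding DA_def by auto
  have i1: "g1 \<in> set (pw v)" using nr[OF assms(2)] p unfolding rejected_def by auto
  have i2: "g2 \<in> set (pw v)" using nr[OF assms(3)] p unfolding rejected_def by auto
  have n1: "\<not> ranked_above (pw v) g2 g1" using nr[OF assms(2)] p ne assms(3) i2 unfolding rejected_def by auto
  have n2: "\<not> ranked_above (pw v) g1 g2" using nr[OF assms(3)] p ne assms(2) i1 unfolding rejected_def by auto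
  obtain i j where ij: "i < length (pw v)" "pw v ! i = g1" "j < length (pw v)" "pw v ! j = g2"
    using i1 i2 by (meson in_set_conv_nth)
  have "i \<noteq> j" using ij ne by auto
  then consider "i < j" | "j < i" by linarith
  then show False
  proof cases
    case 1 then show False using n2 ij unfolding ranked_above_def by blast
  next
    case 2 then show False using n1 ij unfolding ranked_above_def by blast
  qed
qed

lemma payoff_DA:
  assumes "finite F" "g \<in> F" "DA F pf pw g = Some w"
  shows "worker_payoff F uW (DA F pf pw) w = uW w g"
proof -
  have "(THE g'. g' \<in> F \<and> DA F pf pw g' = Some w) = g"
  proof (rule the_equality)
    show "g \<in> F \<and> DA F pf pw g = Some w" using assms by blast
    fix g' assume "g' \<in> F \<and> DA F pf pw g' = Some w"
    then show "g' = g" using DA_unique[OF assms(1) _ assms(2) _ assms(3), of g'] by blast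
  qed
  then show ?thesis using assms unfolding worker_payoff_def by auto
qed

lemma payoff_le:
  assumes "finite F" "\<forall>g\<in>F. uW w g \<le> c" "c \<ge> 0"
  shows "worker_payoff F uW (DA F pf pw) w \<le> c"
proof (cases "\<exists>g\<in>F. DA F pf pw g = Some w")
  case True
  then obtain g where "g \<in> F" "DA F pf pw g = Some w" by blast
  then have "worker_payoff F uW (DA F pf pw) w = uW w g" by (rule payoff_DA[OF assms(1)])
  then show ?thesis using assms(2) \<open>g \<in> F\<close> by simp
next
  case False then show ?thesis using assms unfolding worker_payoff_def by auto
qed


lemma rejected_eq:
  assumes "proposal pf k f \<noteq> Some w"
  shows "rejected F pf pw k g = rejected F pf (pw(w := f # filter (\<lambda>x. x \<noteq> f) (pw w))) k g"
proof (cases "proposal pf k g")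
  case None then show ?thesis unfolding rejected_def by simp
next
  case (Some v)
  show ?thesis
  proof (cases "v = w")
    case False then show ?thesis using Some unfolding rejected_def by simp
  next
    case True
    have gf: "g \<noteq> f" using assms Some True by auto
    let ?L' = "f # filter (\<lambda>x. x \<noteq> f) (pw w)"
    have s1: "(g \<notin> set (pw w)) = (g \<notin> set ?L')" using gf by auto
    have s2: "(\<exists>h\<in>F. h \<noteq> g \<and> proposal pf k h = Some w \<and> h \<in> set (pw w) \<and> ranked_above (pw w) h g)
       = (\<exists>h\<in>F. h \<noteq> g \<and> proposal pf k h = Some w \<and> h \<in> set ?L' \<and> ranked_above ?L' h g)"
    proof (intro bex_cong refl)
      fix h assume "h \<in> F"
      show "(h \<noteq> g \<and> proposal pf k h = Some w \<and> h \<in> set (pw w) \<and> ranked_above (pw w) h g)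
         = (h \<noteq> g \<and> proposal pf k h = Some w \<and> h \<in> set ?L' \<and> ranked_above ?L' h g)"
      proof (cases "h = f")
        case True then show ?thesis using assms by auto
      next
        case False then show ?thesis using ranked_above_move[OF False gf, of "pw w"] by auto
      qed
    qed
    have r: "rejected F pf pw0 k g = (g \<notin> set (pw0 w) \<or> (\<exists>h\<in>F. h \<noteq> g \<and> proposal pf k h = Some w \<and> h \<in> set (pw0 w) \<and> ranked_above (pw0 w) h g))" for pw0
      using Some True unfolding rejected_def by simp
    show ?thesis by (simp only: r fun_upd_same s1 s2)
  qed
qed

lemma step_eq:
  assumes "proposal pf k f \<noteq> Some w"
  shows "da_step F pf pw k = da_step F pf (pw(w := f # filter (\<lambda>x. x \<noteq> f) (pw w))) k"
  unfolding da_step_def using rejected_eq[OF assms] by simp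

lemma iter_eq:
  fixes F pf pw f w pw' defines "pw' \<equiv> pw(w := f # filter (\<lambda>x. x \<noteq> f) (pw w))"
  assumes "\<forall>m<n. proposal pf ((da_step F pf pw' ^^ m) (\<lambda>_. 0)) f \<noteq> Some w"
  shows "(da_step F pf pw ^^ n) (\<lambda>_. 0) = (da_step F pf pw' ^^ n) (\<lambda>_. 0)"
  using assms(2)
proof (induction n)
  case 0 then show ?case by simp
next
  case (Suc n)
  have IH: "(da_step F pf pw ^^ n) (\<lambda>_. 0) = (da_step F pf pw' ^^ n) (\<lambda>_. 0)"
    using Suc.IH Suc.prems by simp
  have np: "proposal pf ((da_step F pf pw' ^^ n) (\<lambda>_. 0)) f \<noteq> Some w"
    using Suc.prems by simp
  have "(da_step F pf pw ^^ Suc n) (\<lambda>_. 0) = da_step F pf pw ((da_step F pf pw' ^^ n) (\<lambda>_. 0))"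
    using IH by simp
  also have "\<dots> = da_step F pf pw' ((da_step F pf pw' ^^ n) (\<lambda>_. 0))"
    unfolding pw'_def by (rule step_eq) (use np in \<open>simp add: pw'_def\<close>)
  also have "\<dots> = (da_step F pf pw' ^^ Suc n) (\<lambda>_. 0)" by simp
  finally show ?case .
qed

lemma stay:
  assumes "proposal pf k f = Some w" "pw w = f # xs" "f \<notin> set xs"
  shows "proposal pf (da_step F pf pw k) f = Some w"
proof -
  have "\<not> rejected F pf pw k f"
  proof
    assume "rejected F pf pw k f"
    then obtain h where "h \<noteq> f" "ranked_above (pw w) h f"
      using assms unfolding rejected_def by auto
    then obtain i j where "i < j" "j < length (pw w)" "pw w ! j = f"
      unfolding ranked_above_def by blast
    then show False using assms(2,3)
      by (cases j) (auto simp: nth_mem)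
  qed
  then have "da_step F pf pw k f = k f" unfolding da_step_def by simp
  then show ?thesis using assms(1) unfolding proposal_def by (auto split: if_splits)
qed

lemma stay_iter:
  assumes "proposal pf ((da_step F pf pw ^^ m) k) f = Some w" "pw w = f # xs" "f \<notin> set xs" "m \<le> n"
  shows "proposal pf ((da_step F pf pw ^^ n) k) f = Some w"
  using assms(4,1)
proof (induction n rule: dec_induct)
  case base then show ?case by simp
next
  case (step n)
  have "proposal pf (da_step F pf pw ((da_step F pf pw ^^ n) k)) f = Some w"
    by (rule stay[where F=F and pw=pw and pf=pf and f=f and w=w, OF step.IH[OF step.prems] assms(2,3)])
  then show ?case by simp
qed


lemma DA_reach:
  assumes fF: "f \<in> F"
    and m: "m \<le> (\<Sum>f\<in>F. length (pf f))"
      "proposal pf ((da_step F pf (pw(w := f # filter (\<lambda>x. x \<noteq> f) (pw w))) ^^ m) (\<lambda>_. 0)) f = Some w"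
  shows "DA F pf (pw(w := f # filter (\<lambda>x. x \<noteq> f) (pw w))) f = Some w"
proof -
  let ?pw' = "pw(w := f # filter (\<lambda>x. x \<noteq> f) (pw w))"
  let ?N = "\<Sum>f\<in>F. length (pf f)"
  have "proposal pf ((da_step F pf ?pw' ^^ ?N) (\<lambda>_. 0)) f = Some w"
    by (rule stay_iter[OF m(2) _ _ m(1)]) auto
  then show ?thesis using fF unfolding DA_def da_final_def by simp
qed

lemma DA_compare:
  assumes finF: "finite F" and fF: "f \<in> F"
  shows "DA F pf (pw(w := f # filter (\<lambda>x. x \<noteq> f) (pw w))) f = Some w
     \<or> DA F pf pw = DA F pf (pw(w := f # filter (\<lambda>x. x \<noteq> f) (pw w)))"
proof -
  let ?pw' = "pw(w := f # filter (\<lambda>x. x \<noteq> f) (pw w))"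
  let ?N = "\<Sum>f\<in>F. length (pf f)"
  show ?thesis
  proof (cases "\<exists>m\<le>?N. proposal pf ((da_step F pf ?pw' ^^ m) (\<lambda>_. 0)) f = Some w")
    case True
    then obtain m where m: "m \<le> ?N" "proposal pf ((da_step F pf ?pw' ^^ m) (\<lambda>_. 0)) f = Some w" by blast
    have "DA F pf ?pw' f = Some w" by (rule DA_reach[OF fF m])
    then show ?thesis by blast
  next
    case False
    then have "\<forall>m<?N. proposal pf ((da_step F pf ?pw' ^^ m) (\<lambda>_. 0)) f \<noteq> Some w" by auto
    from iter_eq[OF this] have "da_final F pf pw = da_final F pf ?pw'"
      unfolding da_final_def by simp
    then have "DA F pf pw = DA F pf ?pw'" unfolding DA_def by (intro ext) simp
    then show ?thesis by blast
  qed
qed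

theorem lemma1:
  fixes F :: "'f set" and W :: "'w set" and \<Theta> :: "'s set" and \<Psi> :: "'s \<Rightarrow> real"
    and uF :: "'s \<Rightarrow> 'f \<Rightarrow> 'w \<Rightarrow> real" and uW :: "'w \<Rightarrow> 'f \<Rightarrow> real"
    and \<sigma> :: "'w \<Rightarrow> 'f list" and \<theta> :: 's and f :: 'f and w :: 'w
  assumes econ: "economy F W \<Theta> \<Psi> uF uW"
    and state: "\<theta> \<in> \<Theta>" and firm: "f \<in> F" and worker: "w \<in> W"
    and top_f: "\<forall>w'\<in>W. uF \<theta> f w' \<le> uF \<theta> f w"
    and top_w: "\<forall>f'\<in>F. uW w f' \<le> uW w f"
    and eq: "BNE F W \<Theta> \<Psi> uF uW \<sigma>"
  shows "DA F (firm_lists W uF \<theta>) \<sigma> f = Some w"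
proof -
  have finF: "finite F" and finW: "finite W" and finT: "finite \<Theta>"
    and Ppos: "\<forall>\<theta>\<in>\<Theta>. \<Psi> \<theta> > 0"
    and injF: "\<forall>\<theta>\<in>\<Theta>. \<forall>f\<in>F. inj_on (uF \<theta> f) W"
    and injW: "\<forall>w\<in>W. inj_on (uW w) F"
    and uWpos: "\<forall>w\<in>W. \<forall>f\<in>F. uW w f > 0"
    using econ unfolding economy_def by auto
  have pos: "uW w f > 0" using uWpos worker firm by auto
  define L' where "L' = f # filter (\<lambda>x. x \<noteq> f) (\<sigma> w)"
  define \<sigma>' where "\<sigma>' = \<sigma>(w := L')"
  have ws: "worker_strategy F (\<sigma> w)" using eq worker unfolding BNE_def by auto
  have wsL: "worker_strategy F L'" using ws firm unfolding worker_strategy_def L'_def by auto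
  have le: "expected_payoff F W \<Theta> \<Psi> uF uW \<sigma>' w \<le> expected_payoff F W \<Theta> \<Psi> uF uW \<sigma> w"
    using eq worker wsL unfolding BNE_def \<sigma>'_def by blast
  let ?p = "\<lambda>s t. worker_payoff F uW (DA F (firm_lists W uF t) s) w"
  have bound: "?p \<sigma> t \<le> uW w f" for t
    by (rule payoff_le[OF finF]) (use top_w pos in auto)
  have mono: "?p \<sigma> t \<le> ?p \<sigma>' t" for t
  proof -
    from DA_compare[OF finF firm, of "firm_lists W uF t" \<sigma> w]
    consider "DA F (firm_lists W uF t) \<sigma>' f = Some w" | "DA F (firm_lists W uF t) \<sigma> = DA F (firm_lists W uF t) \<sigma>'"
      unfolding \<sigma>'_def L'_def by blast
    then show ?thesis
    proof cases
      case 1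
      then have "?p \<sigma>' t = uW w f" by (rule payoff_DA[OF finF firm])
      then show ?thesis using bound[of t] by simp
    next
      case 2 then show ?thesis by simp
    qed
  qed
  let ?pf = "firm_lists W uF \<theta>"
  have pl: "distinct (?pf f) \<and> set (?pf f) = W \<and> sorted_wrt (\<lambda>a b. uF \<theta> f a > uF \<theta> f b) (?pf f)"
    unfolding firm_lists_def by (rule pref_list_props[OF finW]) (use injF state firm in auto)
  obtain i where i: "i < length (?pf f)" "?pf f ! i = w" using pl worker by (metis in_set_conv_nth)
  have h0: "?pf f ! 0 = w"
  proof (rule ccontr)
    assume ne: "?pf f ! 0 \<noteq> w"
    then have "0 < i" using i by (cases i) auto
    then have "uF \<theta> f (?pf f ! 0) > uF \<theta> f (?pf f ! i)"
      using pl i sorted_wrt_nth_less by blast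
    moreover have "?pf f ! 0 \<in> W" using pl i by (metis gr_zeroI less_nat_zero_code nth_mem)
    ultimately show False using top_f i by fastforce
  qed
  have P0: "proposal ?pf ((da_step F ?pf \<sigma>' ^^ 0) (\<lambda>_. 0)) f = Some w"
    unfolding proposal_def using h0 i by auto
  have "DA F ?pf \<sigma>' f = Some w"
    using DA_reach[OF firm _ P0[unfolded \<sigma>'_def L'_def]] unfolding \<sigma>'_def L'_def by simp
  then have top: "?p \<sigma>' \<theta> = uW w f" by (rule payoff_DA[OF finF firm])
  have ge: "?p \<sigma> \<theta> \<ge> uW w f"
  proof (rule ccontr)
    assume "\<not> ?p \<sigma> \<theta> \<ge> uW w f"
    then have lt: "?p \<sigma> \<theta> < ?p \<sigma>' \<theta>" using top by simp
    have "(\<Sum>t\<in>\<Theta>. \<Psi> t * ?p \<sigma> t) < (\<Sum>t\<in>\<Theta>. \<Psi> t * ?p \<sigma>' t)"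
    proof (rule sum_strict_mono_ex1[OF finT])
      show "\<forall>t\<in>\<Theta>. \<Psi> t * ?p \<sigma> t \<le> \<Psi> t * ?p \<sigma>' t"
        using Ppos mono by (auto intro: mult_left_mono less_imp_le)
      show "\<exists>t\<in>\<Theta>. \<Psi> t * ?p \<sigma> t < \<Psi> t * ?p \<sigma>' t"
        using Ppos state lt by (auto intro!: bexI[of _ \<theta>])
    qed
    with le show False unfolding expected_payoff_def by simp
  qed
  have ex: "\<exists>g\<in>F. DA F ?pf \<sigma> g = Some w"
  proof (rule ccontr)
    assume "\<not> ?thesis"
    then have "?p \<sigma> \<theta> = 0" unfolding worker_payoff_def by auto
    with ge pos show False by simp
  qed
  then obtain g where g: "g \<in> F" "DA F ?pf \<sigma> g = Some w" by blast
  have "?p \<sigma> \<theta> = uW w g" by (rule payoff_DA[OF finF g])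
  with ge top_w g(1) have "uW w g = uW w f" by force
  then have "g = f" using injW worker g(1) firm by (auto dest: inj_onD)
  with g show ?thesis by simp
qed

end
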